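(* Let $n\ge 2$ and let $\rho\colon F_n\rtimes B_n\to\mathbf{C}^*$ be a one-dimensional representation, extended linearly to a ring homomorphism $\mathbf{Z}[F_n\rtimes B_n]\to\mathbf{C}$. Let $\rho^+\colon B_n\to\mathrm{GL}(n,\mathbf{C})$ be defined by applying $\rho$ to each entry of the matrix $\phi(\beta)$. Then there exist $s,t\in\mathbf{C}^*$ with $\rho(\sigma_i)=s$ for all $i$ and $\rho(g_j)=t$ for all $j$, and for $i=1,\dots,n-1$ $$\rho^+(\sigma_i)=s\begin{bmatrix} I_{i-1}&&\\ &\begin{matrix}0&t\\1&1-t\end{matrix}&\\ &&I_{n-i-1}\end{bmatrix}.$$ That is, $\rho^+$ is the unreduced Burau representation specialized at $t$ and rescaled by the factor $s$.
   Context: The braid group $B_n$ has generators $\sigma_1,\dots,\sigma_{n-1}$ with relations $\sigma_i\sigma_j=\sigma_j\sigma_i$ for $|i-j|>1$ and $\sigma_i\sigma_j\sigma_i=\sigma_j\sigma_i\sigma_j$ for $|i-j|=1$. Let $F_n$ be the free group on $g_1,\dots,g_n$. The semidirect product $F_n\rtimes B_n$ is the group generated by $F_n$ and $B_n$ subject to the additional relations $g_{i+1}\sigma_i=\sigma_i g_i$, $g_i\sigma_i=\sigma_i g_i g_{i+1}g_i^{-1}$, and $g_j\sigma_i=\sigma_i g_j$ for $j\notin\{i,i+1\}$. Let $\mathbf{Z}[F_n\rtimes B_n]$ be its (noncommutative) group ring. For $i=1,\dots,n-1$ let $R_i=\begin{bmatrix}0&g_i\\1&1-g_i\end{bmatrix}$.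 Let $\phi$ be the homomorphism from $B_n$ to the group of invertible $n\times n$ matrices over $\mathbf{Z}[F_n\rtimes B_n]$ (usual matrix multiplication) given by $\phi(\sigma_i)=\sigma_i\cdot\mathrm{diag}(I_{i-1},R_i,I_{n-i-1})$, where the scalar $\sigma_i$ multiplies every entry on the left. *)

theory Defs
  imports "HOL-Algebra.Group" "Jordan_Normal_Form.Matrix"
begin

datatype gen = Sig nat | Gf nat

(* a letter is a generator with an exponent flag: False = x, True = x^{-1} *)
type_synonym letter = "bool \<times> gen"
type_synonym word = "letter list"

definition valid_gen :: "nat \<Rightarrow> gen \<Rightarrow> bool" where
  "valid_gen n x = (case x of Sig i \<Rightarrow> 1 \<le> i \<and> i \<le> n - 1 | Gf j \<Rightarrow> 1 \<le> j \<and> j \<le> n)"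

definition valid_word :: "nat \<Rightarrow> word \<Rightarrow> bool" where
  "valid_word n w = (\<forall>l \<in> set w. valid_gen n (snd l))"

abbreviation sg :: "nat \<Rightarrow> word" where "sg i \<equiv> [(False, Sig i)]"
abbreviation gg :: "nat \<Rightarrow> word" where "gg j \<equiv> [(False, Gf j)]"
abbreviation ggi :: "nat \<Rightarrow> word" where "ggi j \<equiv> [(True, Gf j)]"

inductive defrel :: "nat \<Rightarrow> word \<Rightarrow> word \<Rightarrow> bool" for n where
  far: "\<lbrakk>1 \<le> i; i \<le> n - 1; 1 \<le> j; j \<le> n - 1; i + 1 < j \<or> j + 1 < i\<rbrakk>
        \<Longrightarrow> defrel n (sg i @ sg j) (sg j @ sg i)"
| braid: "\<lbrakk>1 \<le> i; i \<le> n - 1; 1 \<le> j; j \<le> n - 1; i = j + 1 \<or> j = i + 1\<rbrakk>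
        \<Longrightarrow> defrel n (sg i @ sg j @ sg i) (sg j @ sg i @ sg j)"
| act1: "\<lbrakk>1 \<le> i; i \<le> n - 1\<rbrakk> \<Longrightarrow> defrel n (gg (i+1) @ sg i) (sg i @ gg i)"
| act2: "\<lbrakk>1 \<le> i; i \<le> n - 1\<rbrakk>
        \<Longrightarrow> defrel n (gg i @ sg i) (sg i @ gg i @ gg (i+1) @ ggi i)"
| act3: "\<lbrakk>1 \<le> i; i \<le> n - 1; 1 \<le> j; j \<le> n; j \<noteq> i; j \<noteq> i + 1\<rbrakk>
        \<Longrightarrow> defrel n (gg j @ sg i) (sg i @ gg j)"

inductive peq :: "nat \<Rightarrow> word \<Rightarrow> word \<Rightarrow> bool" for n where
  refl: "peq n w w"
| sym: "peq n u v \<Longrightarrow> peq n v u"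
| trans: "peq n u v \<Longrightarrow> peq n v w \<Longrightarrow> peq n u w"
| ctx: "peq n u v \<Longrightarrow> peq n (a @ u @ b) (a @ v @ b)"
| cancel: "peq n [(e, x), (\<not> e, x)] []"
| rel: "defrel n u v \<Longrightarrow> peq n u v"

definition wclass :: "nat \<Rightarrow> word \<Rightarrow> word set" where
  "wclass n w = {v. valid_word n v \<and> peq n v w}"

definition FB :: "nat \<Rightarrow> word set monoid" where
  "FB n = \<lparr> carrier = {wclass n w | w. valid_word n w},
            mult = (\<lambda>X Y. wclass n ((SOME x. x \<in> X) @ (SOME y. y \<in> Y))),
            one = wclass n [] \<rparr>"

definition sigma :: "nat \<Rightarrow> nat \<Rightarrow> word set" where "sigma n i = wclass n (sg i)"
definition gel :: "nat \<Rightarrow> nat \<Rightarrow> word set" where "gel n j = wclass n (gg j)"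

definition Cstar :: "complex monoid" where
  "Cstar = \<lparr> carrier = UNIV - {0}, mult = (*), one = 1 \<rparr>"

section \<open>Group ring Z[G]: finitely supported functions carrier G \<Rightarrow> int\<close>

definition gr_basis :: "('a, 'b) monoid_scheme \<Rightarrow> 'a \<Rightarrow> ('a \<Rightarrow> int)" where
  "gr_basis G x = (\<lambda>y. if y = x then 1 else 0)"

definition gr_one :: "('a, 'b) monoid_scheme \<Rightarrow> ('a \<Rightarrow> int)" where
  "gr_one G = gr_basis G \<one>\<^bsub>G\<^esub>"

definition gr_mult :: "('a, 'b) monoid_scheme \<Rightarrow> ('a \<Rightarrow> int) \<Rightarrow> ('a \<Rightarrow> int) \<Rightarrow> ('a \<Rightarrow> int)" where
  "gr_mult G f h = (\<lambda>z. \<Sum>x \<in> {x \<in> carrier G. f x \<noteq> 0}. f x * h (inv\<^bsub>G\<^esub> x \<otimes>\<^bsub>G\<^esub> z))"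

definition rho_lin :: "('a, 'b) monoid_scheme \<Rightarrow> ('a \<Rightarrow> complex) \<Rightarrow> ('a \<Rightarrow> int) \<Rightarrow> complex" where
  "rho_lin G \<rho> f = (\<Sum>x \<in> {x \<in> carrier G. f x \<noteq> 0}. of_int (f x) * \<rho> x)"

(* R_i = [[0, g_i], [1, 1 - g_i]] placed in rows/columns i, i+1 (1-based), i.e. i-1, i (0-based);
   identity elsewhere *)
definition diagR :: "nat \<Rightarrow> nat \<Rightarrow> (word set \<Rightarrow> int) mat" where
  "diagR n i = mat n n (\<lambda>(a, b).
     if a = i - 1 \<and> b = i - 1 then (\<lambda>_. 0)
     else if a = i - 1 \<and> b = i then gr_basis (FB n) (gel n i)
     else if a = i \<and> b = i - 1 then gr_one (FB n)
     else if a = i \<and> b = i then (\<lambda>y. gr_one (FB n) y - gr_basis (FB n) (gel n i) y)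
     else if a = b then gr_one (FB n) else (\<lambda>_. 0))"

definition phi_sigma :: "nat \<Rightarrow> nat \<Rightarrow> (word set \<Rightarrow> int) mat" where
  "phi_sigma n i = map_mat (gr_mult (FB n) (gr_basis (FB n) (sigma n i))) (diagR n i)"

definition rho_plus_sigma :: "nat \<Rightarrow> (word set \<Rightarrow> complex) \<Rightarrow> nat \<Rightarrow> complex mat" where
  "rho_plus_sigma n \<rho> i = map_mat (rho_lin (FB n) \<rho>) (phi_sigma n i)"

definition burau :: "nat \<Rightarrow> complex \<Rightarrow> nat \<Rightarrow> complex mat" where
  "burau n t i = mat n n (\<lambda>(a, b).
     if a = i - 1 \<and> b = i - 1 then 0
     else if a = i - 1 \<and> b = i then t
     else if a = i \<and> b = i - 1 then 1
     else if a = i \<and> b = i then 1 - t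
     else if a = b then 1 else 0)"

end

theory Submission
  imports Defs
begin

lemma peq_app: "peq n u u' \<Longrightarrow> peq n v v' \<Longrightarrow> peq n (u@v) (u'@v')"
proof -
  assume a: "peq n u u'" and b: "peq n v v'"
  have "peq n ([] @ u @ v) ([] @ u' @ v)" by (rule peq.ctx[OF a])
  moreover have "peq n (u' @ v @ []) (u' @ v' @ [])" by (rule peq.ctx[OF b])
  ultimately show ?thesis by (auto intro: peq.trans)
qed

lemma valid_app[simp]: "valid_word n (u@v) = (valid_word n u \<and> valid_word n v)"
  by (auto simp: valid_word_def)

lemma valid_cons[simp]: "valid_word n (l # w) = (valid_gen n (snd l) \<and> valid_word n w)"
  by (auto simp: valid_word_def)

lemma valid_nil[simp]: "valid_word n []"
  by (auto simp: valid_word_def)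

lemma wclass_eq: "peq n u v \<Longrightarrow> wclass n u = wclass n v"
  unfolding wclass_def by (auto intro: peq.trans peq.sym)

lemma mem_wclass: "valid_word n w \<Longrightarrow> w \<in> wclass n w"
  unfolding wclass_def by (auto intro: peq.refl)

lemma some_wclass:
  assumes "valid_word n w"
  shows "valid_word n (SOME x. x \<in> wclass n w) \<and> peq n (SOME x. x \<in> wclass n w) w"
proof -
  have "(SOME x. x \<in> wclass n w) \<in> wclass n w" using mem_wclass[OF assms] by (rule someI)
  then show ?thesis unfolding wclass_def by auto
qed

lemma mult_wclass:
  assumes "valid_word n u" "valid_word n v"
  shows "wclass n u \<otimes>\<^bsub>FB n\<^esub> wclass n v = wclass n (u @ v)"
  using some_wclass[OF assms(1)] some_wclass[OF assms(2)]
  by (auto simp: FB_def intro!: wclass_eq peq_app)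

lemma carrier_FB: "X \<in> carrier (FB n) \<longleftrightarrow> (\<exists>w. valid_word n w \<and> X = wclass n w)"
  by (auto simp: FB_def)

lemma one_FB: "\<one>\<^bsub>FB n\<^esub> = wclass n []"
  by (simp add: FB_def)

definition winv :: "word \<Rightarrow> word" where
  "winv w = rev (map (\<lambda>(e,x). (\<not> e, x)) w)"

lemma valid_winv: "valid_word n w \<Longrightarrow> valid_word n (winv w)"
  by (auto simp: valid_word_def winv_def)

lemma winv_winv: "winv (winv w) = w"
  by (induct w) (auto simp: winv_def)

lemma peq_winv: "peq n (w @ winv w) []"
proof (induct w)
  case Nil then show ?case by (simp add: winv_def peq.refl)
next
  case (Cons l w)
  obtain e x where l: "l = (e, x)" by (cases l)
  have eq: "(l # w) @ winv (l # w) = [l] @ (w @ winv w) @ [(\<not> e, x)]"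
    by (simp add: winv_def l)
  have "peq n ([l] @ (w @ winv w) @ [(\<not> e, x)]) ([l] @ [] @ [(\<not> e, x)])"
    by (rule peq.ctx[OF Cons])
  moreover have "peq n ([l] @ [] @ [(\<not> e, x)]) []" using peq.cancel[of n e x] by (simp add: l)
  ultimately show ?case unfolding eq by (rule peq.trans)
qed

lemma group_FB: "group (FB n)"
proof (rule groupI)
  show "\<one>\<^bsub>FB n\<^esub> \<in> carrier (FB n)" unfolding one_FB carrier_FB
    by (intro exI[of _ "[]"]) (auto simp: valid_word_def)
next
  fix x y assume "x \<in> carrier (FB n)" "y \<in> carrier (FB n)"
  then show "x \<otimes>\<^bsub>FB n\<^esub> y \<in> carrier (FB n)"
    unfolding carrier_FB by (metis mult_wclass valid_app)
next
  fix x y z assume "x \<in> carrier (FB n)" "y \<in> carrier (FB n)" "z \<in> carrier (FB n)"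
  then show "x \<otimes>\<^bsub>FB n\<^esub> y \<otimes>\<^bsub>FB n\<^esub> z = x \<otimes>\<^bsub>FB n\<^esub> (y \<otimes>\<^bsub>FB n\<^esub> z)"
    unfolding carrier_FB by (auto simp: mult_wclass)
next
  fix x assume "x \<in> carrier (FB n)"
  then show "\<one>\<^bsub>FB n\<^esub> \<otimes>\<^bsub>FB n\<^esub> x = x"
    unfolding carrier_FB one_FB by (auto simp: mult_wclass valid_word_def)
next
  fix x assume "x \<in> carrier (FB n)"
  then obtain w where w: "valid_word n w" "x = wclass n w" unfolding carrier_FB by auto
  have "wclass n (winv w) \<otimes>\<^bsub>FB n\<^esub> x = wclass n []"
    using w valid_winv[OF w(1)] peq_winv[of n "winv w"]
    by (simp add: mult_wclass winv_winv wclass_eq)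
  moreover have "wclass n (winv w) \<in> carrier (FB n)" using valid_winv[OF w(1)] carrier_FB by auto
  ultimately show "\<exists>y\<in>carrier (FB n). y \<otimes>\<^bsub>FB n\<^esub> x = \<one>\<^bsub>FB n\<^esub>" unfolding one_FB by auto
qed

lemma gr_mult_basis:
  assumes "a \<in> carrier G"
  shows "gr_mult G (gr_basis G a) h = (\<lambda>z. h (inv\<^bsub>G\<^esub> a \<otimes>\<^bsub>G\<^esub> z))"
proof -
  have "{x \<in> carrier G. gr_basis G a x \<noteq> 0} = {a}" using assms by (auto simp: gr_basis_def)
  then show ?thesis unfolding gr_mult_def by (auto simp: gr_basis_def)
qed

lemma rho_lin_shift:
  fixes G (structure)
  assumes G: "group G" and a: "a \<in> carrier G" and S: "finite S" "S \<subseteq> carrier G"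
    and h: "\<forall>y \<in> carrier G - S. h y = 0"
  shows "rho_lin G \<rho> (\<lambda>z. h (inv\<^bsub>G\<^esub> a \<otimes>\<^bsub>G\<^esub> z)) = (\<Sum>y\<in>S. of_int (h y) * \<rho> (a \<otimes>\<^bsub>G\<^esub> y))"
proof -
  interpret group G by (rule G)
  let ?T = "{y \<in> carrier G. h y \<noteq> 0}"
  have TS: "?T \<subseteq> S" using h by auto
  have img: "{z \<in> carrier G. h (inv a \<otimes> z) \<noteq> 0} = (\<lambda>y. a \<otimes> y) ` ?T"
  proof
    show "{z \<in> carrier G. h (inv a \<otimes> z) \<noteq> 0} \<subseteq> (\<lambda>y. a \<otimes> y) ` ?T"
    proof
      fix z assume z: "z \<in> {z \<in> carrier G. h (inv a \<otimes> z) \<noteq> 0}"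
      then have "z = a \<otimes> (inv a \<otimes> z)" using a by (simp add: m_assoc[symmetric])
      then show "z \<in> (\<lambda>y. a \<otimes> y) ` ?T" using z a by auto
    qed
  next
    show "(\<lambda>y. a \<otimes> y) ` ?T \<subseteq> {z \<in> carrier G. h (inv a \<otimes> z) \<noteq> 0}"
      using a by (auto simp: m_assoc[symmetric])
  qed
  have inj: "inj_on (\<lambda>y. a \<otimes> y) ?T" using a by (auto intro!: inj_onI)
  have "rho_lin G \<rho> (\<lambda>z. h (inv a \<otimes> z)) = (\<Sum>y\<in>?T. of_int (h (inv a \<otimes> (a \<otimes> y))) * \<rho> (a \<otimes> y))"
    unfolding rho_lin_def img by (simp add: sum.reindex[OF inj])
  also have "\<dots> = (\<Sum>y\<in>?T. of_int (h y) * \<rho> (a \<otimes> y))"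
    using a by (intro sum.cong) (auto simp: m_assoc[symmetric])
  also have "\<dots> = (\<Sum>y\<in>S. of_int (h y) * \<rho> (a \<otimes> y))"
    using TS S h by (intro sum.mono_neutral_left) auto
  finally show ?thesis .
qed

lemma defrel_wclass: "defrel n u v \<Longrightarrow> wclass n u = wclass n v"
  by (rule wclass_eq) (rule peq.rel)

theorem proposition2p1:
  fixes n :: nat and \<rho> :: "word set \<Rightarrow> complex"
  assumes "n \<ge> 2"
    and "\<rho> \<in> hom (FB n) Cstar"
  shows "\<exists>s t. s \<noteq> 0 \<and> t \<noteq> 0 \<and>
           (\<forall>i \<in> {1..n-1}. \<rho> (sigma n i) = s) \<and>
           (\<forall>j \<in> {1..n}. \<rho> (gel n j) = t) \<and>
           (\<forall>i \<in> {1..n-1}. rho_plus_sigma n \<rho> i = s \<cdot>\<^sub>m burau n t i)"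
proof -
  interpret G: group "FB n" by (rule group_FB)
  have nz: "\<And>x. x \<in> carrier (FB n) \<Longrightarrow> \<rho> x \<noteq> 0"
    using assms(2) by (auto simp: hom_def Cstar_def Pi_def)
  have hm: "\<And>x y. x \<in> carrier (FB n) \<Longrightarrow> y \<in> carrier (FB n) \<Longrightarrow> \<rho> (x \<otimes>\<^bsub>FB n\<^esub> y) = \<rho> x * \<rho> y"
    using assms(2) by (auto simp: hom_def Cstar_def)
  have one: "\<rho> \<one>\<^bsub>FB n\<^esub> = 1"
  proof -
    have "\<rho> \<one>\<^bsub>FB n\<^esub> = \<rho> \<one>\<^bsub>FB n\<^esub> * \<rho> \<one>\<^bsub>FB n\<^esub>" using hm[of "\<one>\<^bsub>FB n\<^esub>" "\<one>\<^bsub>FB n\<^esub>"] by simp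
    then show ?thesis using nz[of "\<one>\<^bsub>FB n\<^esub>"] by simp
  qed
  have vs: "\<And>i. 1 \<le> i \<Longrightarrow> i \<le> n - 1 \<Longrightarrow> valid_word n (sg i)"
    by (simp add: valid_word_def valid_gen_def)
  have vg: "\<And>j. 1 \<le> j \<Longrightarrow> j \<le> n \<Longrightarrow> valid_word n (gg j)"
    by (simp add: valid_word_def valid_gen_def)
  have cs: "\<And>i. 1 \<le> i \<Longrightarrow> i \<le> n - 1 \<Longrightarrow> sigma n i \<in> carrier (FB n)"
    using vs unfolding sigma_def carrier_FB by blast
  have cg: "\<And>j. 1 \<le> j \<Longrightarrow> j \<le> n \<Longrightarrow> gel n j \<in> carrier (FB n)"
    using vg unfolding gel_def carrier_FB by blast
  have rw: "\<And>u v. valid_word n u \<Longrightarrow> valid_word n v \<Longrightarrow> \<rho> (wclass n (u @ v)) = \<rho> (wclass n u) * \<rho> (wclass n v)"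
    by (metis mult_wclass hm carrier_FB)
  define s where "s = \<rho> (sigma n 1)"
  define t where "t = \<rho> (gel n 1)"
  have sS: "\<forall>i. 1 \<le> i \<longrightarrow> i \<le> n - 1 \<longrightarrow> \<rho> (sigma n i) = s"
  proof (intro allI)
    fix i show "1 \<le> i \<longrightarrow> i \<le> n - 1 \<longrightarrow> \<rho> (sigma n i) = s"
    proof (induct i)
      case 0 then show ?case by simp
    next
      case (Suc i)
      show ?case
      proof (intro impI)
        assume h: "1 \<le> Suc i" "Suc i \<le> n - 1"
        show "\<rho> (sigma n (Suc i)) = s"
        proof (cases "i = 0")
          case True then show ?thesis by (simp add: s_def)
        next
          case False
          then have i: "1 \<le> i" "i \<le> n - 1" using h by auto
          have d: "defrel n (sg i @ sg (Suc i) @ sg i) (sg (Suc i) @ sg i @ sg (Suc i))"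
            using i h by (intro defrel.braid) auto
          let ?a = "\<rho> (sigma n i)" and ?b = "\<rho> (sigma n (Suc i))"
          have "\<rho> (wclass n (sg i @ sg (Suc i) @ sg i)) = \<rho> (wclass n (sg (Suc i) @ sg i @ sg (Suc i)))"
            using defrel_wclass[OF d] by simp
          moreover have "\<rho> (wclass n (sg i @ sg (Suc i) @ sg i)) = ?a * (?b * ?a)"
            using rw[OF vs[OF i], of "sg (Suc i) @ sg i"] rw[OF vs[OF h] vs[OF i]] vs[OF h] vs[OF i]
            unfolding sigma_def by simp
          moreover have "\<rho> (wclass n (sg (Suc i) @ sg i @ sg (Suc i))) = ?b * (?a * ?b)"
            using rw[OF vs[OF h], of "sg i @ sg (Suc i)"] rw[OF vs[OF i] vs[OF h]] vs[OF h] vs[OF i]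
            unfolding sigma_def by simp
          ultimately have "?a * ?b * ?a = ?b * ?a * ?b" by (simp add: mult.assoc)
          then have "?a * ?b * (?a - ?b) = 0" by (simp add: algebra_simps)
          then have "?a = ?b" using nz[OF cs[OF i]] nz[OF cs[OF h]] by simp
          then show ?thesis using Suc i by simp
        qed
      qed
    qed
  qed
  have tT: "\<forall>j. 1 \<le> j \<longrightarrow> j \<le> n \<longrightarrow> \<rho> (gel n j) = t"
  proof (intro allI)
    fix j show "1 \<le> j \<longrightarrow> j \<le> n \<longrightarrow> \<rho> (gel n j) = t"
    proof (induct j)
      case 0 then show ?case by simp
    next
      case (Suc i)
      show ?case
      proof (intro impI)
        assume h: "1 \<le> Suc i" "Suc i \<le> n"
        show "\<rho> (gel n (Suc i)) = t"
        proof (cases "i = 0")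
          case True then show ?thesis by (simp add: t_def)
        next
          case False
          then have i: "1 \<le> i" "i \<le> n - 1" using h by auto
          have d: "defrel n (gg (i+1) @ sg i) (sg i @ gg i)"
            using i by (intro defrel.act1) auto
          have i2: "1 \<le> i" "i \<le> n" using i by auto
          let ?a = "\<rho> (sigma n i)" and ?b = "\<rho> (gel n (Suc i))" and ?c = "\<rho> (gel n i)"
          have "\<rho> (wclass n (gg (i+1) @ sg i)) = \<rho> (wclass n (sg i @ gg i))"
            using defrel_wclass[OF d] by simp
          moreover have "\<rho> (wclass n (gg (i+1) @ sg i)) = ?b * ?a"
            using rw[OF vg[OF h] vs[OF i]] unfolding sigma_def gel_def by simp
          moreover have "\<rho> (wclass n (sg i @ gg i)) = ?a * ?c"
            using rw[OF vs[OF i] vg[OF i2]] unfolding sigma_def gel_def by simp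
          ultimately have "?b * ?a = ?a * ?c" by simp
          then have "?b = ?c" using nz[OF cs[OF i]] by (simp add: mult.commute)
          then show ?thesis using Suc i2 by simp
        qed
      qed
    qed
  qed
  have s0: "s \<noteq> 0" unfolding s_def using nz cs assms(1) by simp
  have t0: "t \<noteq> 0" unfolding t_def using nz cg assms(1) by simp
  have main: "rho_plus_sigma n \<rho> i = s \<cdot>\<^sub>m burau n t i" if i: "1 \<le> i" "i \<le> n - 1" for i
  proof -
    let ?a = "sigma n i" and ?g = "gel n i" and ?G = "FB n"
    have a: "?a \<in> carrier ?G" using cs[OF i] .
    have g: "?g \<in> carrier ?G" using cg i by simp
    have ra: "\<rho> ?a = s" using sS i by simp
    have rg: "\<rho> ?g = t" using tT i by simp
    have key: "rho_lin ?G \<rho> (gr_mult ?G (gr_basis ?G ?a) h) = (\<Sum>y\<in>S. of_int (h y) * \<rho> (?a \<otimes>\<^bsub>?G\<^esub> y))"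
      if "finite S" "S \<subseteq> carrier ?G" "\<forall>y \<in> carrier ?G - S. h y = 0" for h S
      unfolding gr_mult_basis[OF a] by (rule rho_lin_shift[OF group_FB a that])
    have e0: "rho_lin ?G \<rho> (gr_mult ?G (gr_basis ?G ?a) (\<lambda>_. 0)) = 0"
      using key[of "{}" "\<lambda>_. 0"] by simp
    have e1: "rho_lin ?G \<rho> (gr_mult ?G (gr_basis ?G ?a) (gr_basis ?G ?g)) = s * t"
      using key[of "{?g}" "gr_basis ?G ?g"] g hm[OF a g] ra rg by (simp add: gr_basis_def)
    have e2: "rho_lin ?G \<rho> (gr_mult ?G (gr_basis ?G ?a) (gr_one ?G)) = s"
      using key[of "{\<one>\<^bsub>?G\<^esub>}" "gr_one ?G"] ra a by (simp add: gr_basis_def gr_one_def)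
    have e3: "rho_lin ?G \<rho> (gr_mult ?G (gr_basis ?G ?a) (\<lambda>y. gr_one ?G y - gr_basis ?G ?g y)) = s * (1 - t)"
    proof (cases "?g = \<one>\<^bsub>?G\<^esub>")
      case True
      then have "t = 1" using rg one by simp
      then show ?thesis using key[of "{\<one>\<^bsub>?G\<^esub>}" "\<lambda>y. gr_one ?G y - gr_basis ?G ?g y"] True
        by (simp add: gr_basis_def gr_one_def)
    next
      case False
      then show ?thesis using key[of "{\<one>\<^bsub>?G\<^esub>, ?g}" "\<lambda>y. gr_one ?G y - gr_basis ?G ?g y"] g a
          hm[OF a g] ra rg
        by (simp add: gr_basis_def gr_one_def algebra_simps)
    qed
    show ?thesis
    proof (rule eq_matI)
      fix r c assume rc: "r < dim_row (s \<cdot>\<^sub>m burau n t i)" "c < dim_col (s \<cdot>\<^sub>m burau n t i)"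
      then have rc': "r < n" "c < n" by (auto simp: burau_def)
      show "rho_plus_sigma n \<rho> i $$ (r, c) = (s \<cdot>\<^sub>m burau n t i) $$ (r, c)"
      proof -
        let ?f = "\<lambda>x. rho_lin ?G \<rho> (gr_mult ?G (gr_basis ?G ?a) x)"
        have "rho_plus_sigma n \<rho> i $$ (r, c) = ?f (diagR n i $$ (r, c))"
          using rc' by (simp add: rho_plus_sigma_def phi_sigma_def diagR_def)
        also have "diagR n i $$ (r, c) = (if r = i - 1 \<and> c = i - 1 then (\<lambda>_. 0)
             else if r = i - 1 \<and> c = i then gr_basis (FB n) (gel n i)
             else if r = i \<and> c = i - 1 then gr_one (FB n)
             else if r = i \<and> c = i then (\<lambda>y. gr_one (FB n) y - gr_basis (FB n) (gel n i) y)
             else if r = c then gr_one (FB n) else (\<lambda>_. 0))"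
          using rc' by (simp add: diagR_def)
        also have "(s \<cdot>\<^sub>m burau n t i) $$ (r, c) = s * (if r = i - 1 \<and> c = i - 1 then 0
             else if r = i - 1 \<and> c = i then t
             else if r = i \<and> c = i - 1 then 1
             else if r = i \<and> c = i then 1 - t
             else if r = c then 1 else 0)"
          using rc' by (simp add: burau_def)
        ultimately show ?thesis using e0 e1 e2 e3
          by (simp only: if_distrib[of ?f] if_distrib[of "(*) s"]) simp
      qed
    qed (auto simp: rho_plus_sigma_def phi_sigma_def diagR_def burau_def)
  qed
  show ?thesis
    using s0 t0 sS tT main by (intro exI[of _ s] exI[of _ t]) auto
qed

end
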